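(* Let $G$ be a group, $N\unlhd G$, and $M=\mathcal{M}(G,N)$. Then (i) $M$ is residually finite if and only if $G$ is residually finite; (ii) the action of $M$ on its $\mathcal{L}$-classes is residually finite if and only if the group $G/N$ is residually finite.
   Context: For a group $G$ with normal subgroup $N$, let $\overline{N}=\{\overline{n}:n\in N\}$ be a disjoint copy of $N$ and define the monoid $\mathcal{M}(G,N)$ by the presentation with generators $G\cup\overline{N}\cup\{h\}$ (together with the multiplication tables of $G$ and $\overline{N}$, and a zero $0$) and relations $hn=\overline{n}h$ $(n\in N)$, $he_G=e_{\overline{N}}h=h$, $g\overline{n}=\overline{n}g=gh=h\overline{n}=0$ ($g\in G$, $n\in N$). A monoid/group is residually finite if distinct elements are separated by homomorphisms to finite monoids/groups. $x\mathcal{L}y$ iff $Mx=My$; $M$ acts on the right on $M/\mathcal{L}$ via $L_x\cdot m=L_{xm}$. This action is residually finite iff for all $(s,t)\notin\mathcal{L}$ there is a finite-index right congruence $\rho$ on $M$ with $\mathcal{L}\subseteq\rho$ and $(s,t)\notin\rho$. *)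

theory Defs
  imports "HOL-Algebra.Coset"
begin

inductive pres_eq :: "'a set \<Rightarrow> ('a list \<times> 'a list) set \<Rightarrow> 'a list \<Rightarrow> 'a list \<Rightarrow> bool"
  for A R where
  pres_refl: "w \<in> lists A \<Longrightarrow> pres_eq A R w w"
| pres_rel: "(l, r) \<in> R \<Longrightarrow> u \<in> lists A \<Longrightarrow> v \<in> lists A \<Longrightarrow> pres_eq A R (u @ l @ v) (u @ r @ v)"
| pres_sym: "pres_eq A R w w' \<Longrightarrow> pres_eq A R w' w"
| pres_trans: "pres_eq A R w w' \<Longrightarrow> pres_eq A R w' w'' \<Longrightarrow> pres_eq A R w w''"

definition pres_class :: "'a set \<Rightarrow> ('a list \<times> 'a list) set \<Rightarrow> 'a list \<Rightarrow> 'a list set" where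
  "pres_class A R w = {w'. pres_eq A R w w'}"

definition presented_monoid :: "'a set \<Rightarrow> ('a list \<times> 'a list) set \<Rightarrow> 'a list set monoid" where
  "presented_monoid A R =
     \<lparr> carrier = pres_class A R ` lists A,
       mult = (\<lambda>X Y. {w. \<exists>x\<in>X. \<exists>y\<in>Y. pres_eq A R (x @ y) w}),
       one = pres_class A R [] \<rparr>"

text \<open>Generators: elements of G (GE g), the disjoint copy N-bar of N (NB n), h, and the zero.\<close>
datatype 'g gen = GE 'g | NB 'g | Hgen | Zgen

definition MGN_alph :: "('g, 'b) monoid_scheme \<Rightarrow> 'g set \<Rightarrow> 'g gen set" where
  "MGN_alph G N = GE ` carrier G \<union> NB ` N \<union> {Hgen, Zgen}"

definition MGN_rels :: "('g, 'b) monoid_scheme \<Rightarrow> 'g set \<Rightarrow> ('g gen list \<times> 'g gen list) set" where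
  "MGN_rels G N =
     \<comment> \<open>multiplication table of G\<close>
     {([GE a, GE b], [GE (a \<otimes>\<^bsub>G\<^esub> b)]) | a b. a \<in> carrier G \<and> b \<in> carrier G}
   \<union> \<comment> \<open>multiplication table of N-bar\<close>
     {([NB a, NB b], [NB (a \<otimes>\<^bsub>G\<^esub> b)]) | a b. a \<in> N \<and> b \<in> N}
   \<union> \<comment> \<open>zero\<close>
     {([Zgen, x], [Zgen]) | x. x \<in> MGN_alph G N}
   \<union> {([x, Zgen], [Zgen]) | x. x \<in> MGN_alph G N}
   \<union> \<comment> \<open>h n = n-bar h\<close>
     {([Hgen, GE n], [NB n, Hgen]) | n. n \<in> N}
   \<union> \<comment> \<open>h e_G = e_Nbar h = h\<close>
     {([Hgen, GE \<one>\<^bsub>G\<^esub>], [Hgen]), ([NB \<one>\<^bsub>G\<^esub>, Hgen], [Hgen])}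
   \<union> \<comment> \<open>g n-bar = n-bar g = g h = h n-bar = 0\<close>
     {([GE g, NB n], [Zgen]) | g n. g \<in> carrier G \<and> n \<in> N}
   \<union> {([NB n, GE g], [Zgen]) | g n. g \<in> carrier G \<and> n \<in> N}
   \<union> {([GE g, Hgen], [Zgen]) | g. g \<in> carrier G}
   \<union> {([Hgen, NB n], [Zgen]) | n. n \<in> N}"

definition MGN :: "('g, 'b) monoid_scheme \<Rightarrow> 'g set \<Rightarrow> 'g gen list set monoid" where
  "MGN G N = presented_monoid (MGN_alph G N) (MGN_rels G N)"

text \<open>Finite target monoids/groups are taken with carrier a set of naturals; every
  finite monoid is isomorphic to such a one.\<close>

definition monoid_res_finite :: "('a, 'b) monoid_scheme \<Rightarrow> bool" where
  "monoid_res_finite M \<longleftrightarrow>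
     (\<forall>x\<in>carrier M. \<forall>y\<in>carrier M. x \<noteq> y \<longrightarrow>
        (\<exists>(F :: nat monoid) f. monoid F \<and> finite (carrier F) \<and> f \<in> hom M F
            \<and> f \<one>\<^bsub>M\<^esub> = \<one>\<^bsub>F\<^esub> \<and> f x \<noteq> f y))"

definition group_res_finite :: "('a, 'b) monoid_scheme \<Rightarrow> bool" where
  "group_res_finite G \<longleftrightarrow>
     (\<forall>x\<in>carrier G. \<forall>y\<in>carrier G. x \<noteq> y \<longrightarrow>
        (\<exists>(F :: nat monoid) f. group F \<and> finite (carrier F) \<and> f \<in> hom G F \<and> f x \<noteq> f y))"

definition greenL :: "('a, 'b) monoid_scheme \<Rightarrow> ('a \<times> 'a) set" where
  "greenL M = {(x, y). x \<in> carrier M \<and> y \<in> carrier M \<and>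
                 (\<lambda>m. m \<otimes>\<^bsub>M\<^esub> x) ` carrier M = (\<lambda>m. m \<otimes>\<^bsub>M\<^esub> y) ` carrier M}"

definition right_congruence :: "('a, 'b) monoid_scheme \<Rightarrow> ('a \<times> 'a) set \<Rightarrow> bool" where
  "right_congruence M \<rho> \<longleftrightarrow> equiv (carrier M) \<rho> \<and>
     (\<forall>s t m. (s, t) \<in> \<rho> \<longrightarrow> m \<in> carrier M \<longrightarrow> (s \<otimes>\<^bsub>M\<^esub> m, t \<otimes>\<^bsub>M\<^esub> m) \<in> \<rho>)"

definition L_action_res_finite :: "('a, 'b) monoid_scheme \<Rightarrow> bool" where
  "L_action_res_finite M \<longleftrightarrow>
     (\<forall>s\<in>carrier M. \<forall>t\<in>carrier M. (s, t) \<notin> greenL M \<longrightarrow>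
        (\<exists>\<rho>. right_congruence M \<rho> \<and> finite (carrier M // \<rho>) \<and> greenL M \<subseteq> \<rho> \<and> (s, t) \<notin> \<rho>))"

end

theory Submission
  imports Defs "HOL-Algebra.Bij"
begin


lemma iso_sym_gen:
  assumes "h \<in> iso G H" "monoid G"
  shows "inv_into (carrier G) h \<in> iso H G"
proof -
  have h: "h \<in> hom G H" "bij_betw h (carrier G) (carrier H)"
    using assms by (auto simp add: iso_def bij_betw_inv_into)
  then have HG: "bij_betw (inv_into (carrier G) h) (carrier H) (carrier G)"
    by (simp add: bij_betw_inv_into)
  have *: "\<And>x. x \<in> carrier H \<Longrightarrow> inv_into (carrier G) h x \<in> carrier G"
    by (meson HG bij_betwE)
  have "inv_into (carrier G) h \<in> hom H G"
    unfolding hom_def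
  proof safe
    show "\<And>x. x \<in> carrier H \<Longrightarrow> inv_into (carrier G) h x \<in> carrier G" by (rule *)
    show "inv_into (carrier G) h (x \<otimes>\<^bsub>H\<^esub> y) = inv_into (carrier G) h x \<otimes>\<^bsub>G\<^esub> inv_into (carrier G) h y"
      if "x \<in> carrier H" "y \<in> carrier H" for x y
    proof -
      have "x \<otimes>\<^bsub>H\<^esub> y = h (inv_into (carrier G) h x) \<otimes>\<^bsub>H\<^esub> h (inv_into (carrier G) h y)"
        using h that by (simp add: bij_betw_inv_into_right)
      also have "\<dots> = h (inv_into (carrier G) h x \<otimes>\<^bsub>G\<^esub> inv_into (carrier G) h y)"
        using h(1) * that by (simp add: hom_mult)
      finally have e: "x \<otimes>\<^bsub>H\<^esub> y = h (inv_into (carrier G) h x \<otimes>\<^bsub>G\<^esub> inv_into (carrier G) h y)" .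
      have "inv_into (carrier G) h x \<otimes>\<^bsub>G\<^esub> inv_into (carrier G) h y \<in> carrier G"
        using * that assms(2) by (simp add: monoid.m_closed)
      then show ?thesis unfolding e using h(2) by (simp add: bij_betw_def inv_into_f_f)
    qed
  qed
  then show ?thesis
    by (simp add: iso_def bij_betw_inv_into h)
qed

lemma iso_one_inv:
  assumes "h \<in> iso G H" "monoid G" "h \<one>\<^bsub>G\<^esub> = \<one>\<^bsub>H\<^esub>"
  shows "inv_into (carrier G) h \<one>\<^bsub>H\<^esub> = \<one>\<^bsub>G\<^esub>"
proof -
  have inj: "inj_on h (carrier G)" using assms(1) by (simp add: iso_def bij_betw_def)
  have one: "\<one>\<^bsub>G\<^esub> \<in> carrier G" using assms(2) by (simp add: monoid.one_closed)
  show ?thesis using inv_into_f_f[OF inj one] assms(3) by simp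
qed

lemma monoid_iso_transfer:
  assumes "monoid A" "\<Phi> \<in> iso A B" "\<Phi> \<one>\<^bsub>A\<^esub> = \<one>\<^bsub>B\<^esub>"
  shows "monoid B"
proof -
  interpret A: monoid A by fact
  have hom: "\<Phi> \<in> hom A B" and bij: "bij_betw \<Phi> (carrier A) (carrier B)"
    using assms(2) by (auto simp: iso_def)
  have sur: "carrier B = \<Phi> ` carrier A" using bij by (simp add: bij_betw_def)
  have mul: "\<And>x y. x \<in> carrier A \<Longrightarrow> y \<in> carrier A \<Longrightarrow> \<Phi> (x \<otimes>\<^bsub>A\<^esub> y) = \<Phi> x \<otimes>\<^bsub>B\<^esub> \<Phi> y"
    using hom by (simp add: hom_mult)
  show ?thesis
  proof (rule monoidI)
    fix x y assume "x \<in> carrier B" "y \<in> carrier B"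
    then obtain a b where ab: "a \<in> carrier A" "b \<in> carrier A" "x = \<Phi> a" "y = \<Phi> b" using sur by auto
    then have "a \<otimes>\<^bsub>A\<^esub> b \<in> carrier A" by simp
    then have "\<Phi> (a \<otimes>\<^bsub>A\<^esub> b) \<in> carrier B" using sur by blast
    then show "x \<otimes>\<^bsub>B\<^esub> y \<in> carrier B" using mul[of a b] ab by simp
  next
    show "\<one>\<^bsub>B\<^esub> \<in> carrier B" using sur assms(3) by force
  next
    fix x y z assume "x \<in> carrier B" "y \<in> carrier B" "z \<in> carrier B"
    then obtain a b c where "a \<in> carrier A" "b \<in> carrier A" "c \<in> carrier A" "x = \<Phi> a" "y = \<Phi> b" "z = \<Phi> c" using sur by auto
    then show "x \<otimes>\<^bsub>B\<^esub> y \<otimes>\<^bsub>B\<^esub> z = x \<otimes>\<^bsub>B\<^esub> (y \<otimes>\<^bsub>B\<^esub> z)"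
      using mul by (metis A.m_assoc A.m_closed)
  next
    fix x assume "x \<in> carrier B"
    then obtain a where "a \<in> carrier A" "x = \<Phi> a" using sur by auto
    then show "\<one>\<^bsub>B\<^esub> \<otimes>\<^bsub>B\<^esub> x = x" "x \<otimes>\<^bsub>B\<^esub> \<one>\<^bsub>B\<^esub> = x"
      using mul assms(3) by (metis A.l_one A.one_closed, metis A.r_one A.one_closed)
  qed
qed

lemma group_iso_transfer:
  assumes "group A" "\<Phi> \<in> iso A B" "\<Phi> \<one>\<^bsub>A\<^esub> = \<one>\<^bsub>B\<^esub>"
  shows "group B"
proof -
  interpret A: group A by fact
  have hom: "\<Phi> \<in> hom A B" and bij: "bij_betw \<Phi> (carrier A) (carrier B)"
    using assms(2) by (auto simp: iso_def)
  have sur: "carrier B = \<Phi> ` carrier A" using bij by (simp add: bij_betw_def)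
  have mul: "\<And>x y. x \<in> carrier A \<Longrightarrow> y \<in> carrier A \<Longrightarrow> \<Phi> (x \<otimes>\<^bsub>A\<^esub> y) = \<Phi> x \<otimes>\<^bsub>B\<^esub> \<Phi> y"
    using hom by (simp add: hom_mult)
  interpret B: monoid B using monoid_iso_transfer[OF A.monoid_axioms assms(2,3)] .
  show ?thesis
  proof (rule B.group_l_invI)
    fix x assume "x \<in> carrier B"
    then obtain a where "a \<in> carrier A" "x = \<Phi> a" using sur by auto
    then show "\<exists>y\<in>carrier B. y \<otimes>\<^bsub>B\<^esub> x = \<one>\<^bsub>B\<^esub>"
      using mul[of "inv\<^bsub>A\<^esub> a" a] assms(3) sur by (intro bexI[of _ "\<Phi> (inv\<^bsub>A\<^esub> a)"]) auto
  qed
qed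

lemma nat_copy:
  assumes "monoid K" "finite (carrier K)"
  shows "\<exists>(F::nat monoid) e. monoid F \<and> finite (carrier F) \<and> e \<in> iso K F \<and> e \<one>\<^bsub>K\<^esub> = \<one>\<^bsub>F\<^esub>
     \<and> (group K \<longrightarrow> group F)"
proof -
  obtain e :: "_ \<Rightarrow> nat" and n where e: "e ` carrier K = {i. i < n}" "inj_on e (carrier K)"
    using finite_imp_inj_to_nat_seg[OF assms(2)] by blast
  define F :: "nat monoid" where "F = \<lparr>carrier = e ` carrier K,
     mult = (\<lambda>a b. e (inv_into (carrier K) e a \<otimes>\<^bsub>K\<^esub> inv_into (carrier K) e b)),
     one = e \<one>\<^bsub>K\<^esub>\<rparr>"
  have inv: "\<And>x. x \<in> carrier K \<Longrightarrow> inv_into (carrier K) e (e x) = x"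
    using e(2) by (simp add: inv_into_f_f)
  have hom: "e \<in> hom K F"
  proof (rule homI)
    fix x assume "x \<in> carrier K" then show "e x \<in> carrier F" by (simp add: F_def)
  next
    fix x y assume "x \<in> carrier K" "y \<in> carrier K"
    then show "e (x \<otimes>\<^bsub>K\<^esub> y) = e x \<otimes>\<^bsub>F\<^esub> e y" by (simp add: F_def inv)
  qed
  have "bij_betw e (carrier K) (carrier F)" using e(2) by (simp add: bij_betw_def F_def)
  then have iso: "e \<in> iso K F" using hom by (simp add: iso_def)
  have one: "e \<one>\<^bsub>K\<^esub> = \<one>\<^bsub>F\<^esub>" by (simp add: F_def)
  have fin: "finite (carrier F)" using assms(2) unfolding F_def by simp
  have m: "monoid F" by (rule monoid_iso_transfer[OF assms(1) iso one])
  have g: "group K \<longrightarrow> group F" using group_iso_transfer[OF _ iso one] by blast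
  show ?thesis
    apply (rule exI[of _ F])
    apply (rule exI[of _ e])
    using m fin iso one g by blast
qed



datatype 'g el = One | Zero | Gg 'g | Nn 'g | Hh 'g

fun cmul :: "('g,'b) monoid_scheme \<Rightarrow> 'g el \<Rightarrow> 'g el \<Rightarrow> 'g el" where
  "cmul G One y = y"
| "cmul G x One = x"
| "cmul G (Gg a) (Gg b) = Gg (a \<otimes>\<^bsub>G\<^esub> b)"
| "cmul G (Nn a) (Nn b) = Nn (a \<otimes>\<^bsub>G\<^esub> b)"
| "cmul G (Nn a) (Hh b) = Hh (a \<otimes>\<^bsub>G\<^esub> b)"
| "cmul G (Hh a) (Gg b) = Hh (a \<otimes>\<^bsub>G\<^esub> b)"
| "cmul G x y = Zero"

definition Cset :: "('g,'b) monoid_scheme \<Rightarrow> 'g set \<Rightarrow> 'g el set" where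
  "Cset G N = {One, Zero} \<union> Gg ` carrier G \<union> Nn ` N \<union> Hh ` carrier G"

definition Cm :: "('g,'b) monoid_scheme \<Rightarrow> 'g set \<Rightarrow> 'g el monoid" where
  "Cm G N = \<lparr>carrier = Cset G N, mult = cmul G, one = One\<rparr>"

lemma Cset_cases:
  assumes "x \<in> Cset G N"
  obtains "x = One" | "x = Zero" | a where "a \<in> carrier G" "x = Gg a"
    | a where "a \<in> N" "x = Nn a" | a where "a \<in> carrier G" "x = Hh a"
  using assms unfolding Cset_def by blast

lemma Cset_simps [simp]:
  "One \<in> Cset G N" "Zero \<in> Cset G N" "Gg a \<in> Cset G N \<longleftrightarrow> a \<in> carrier G"
  "Nn a \<in> Cset G N \<longleftrightarrow> a \<in> N" "Hh a \<in> Cset G N \<longleftrightarrow> a \<in> carrier G"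
  by (auto simp: Cset_def)

lemma cmul_Zero_right [simp]: "cmul G x Zero = Zero"
  by (cases x) auto

lemma cmul_Zero_left [simp]: "cmul G Zero x = Zero"
  by (cases x) auto

lemma cmul_One_right [simp]: "cmul G x One = x"
  by (cases x) auto

lemma Cm_monoid:
  assumes "monoid G" "N \<subseteq> carrier G" "\<And>a b. a \<in> N \<Longrightarrow> b \<in> N \<Longrightarrow> a \<otimes>\<^bsub>G\<^esub> b \<in> N"
  shows "monoid (Cm G N)"
proof -
  interpret monoid G by fact
  have cl: "cmul G x y \<in> Cset G N" if "x \<in> Cset G N" "y \<in> Cset G N" for x y
    using that assms(2,3)
    by (cases rule: Cset_cases[OF that(1)]; cases rule: Cset_cases[OF that(2)]) auto
  have as: "cmul G (cmul G x y) z = cmul G x (cmul G y z)"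
    if "x \<in> Cset G N" "y \<in> Cset G N" "z \<in> Cset G N" for x y z
    using that assms(2)
    by (cases rule: Cset_cases[OF that(1)]; cases rule: Cset_cases[OF that(2)];
        cases rule: Cset_cases[OF that(3)]) (auto simp: m_assoc subsetD)
  show ?thesis
    by (rule monoidI) (auto simp: Cm_def cl as)
qed

fun evg :: "('g,'b) monoid_scheme \<Rightarrow> 'g gen \<Rightarrow> 'g el" where
  "evg G (GE g) = Gg g" | "evg G (NB n) = Nn n" | "evg G Hgen = Hh \<one>\<^bsub>G\<^esub>" | "evg G Zgen = Zero"

fun ev :: "('g,'b) monoid_scheme \<Rightarrow> 'g gen list \<Rightarrow> 'g el" where
  "ev G [] = One" | "ev G (a # w) = cmul G (evg G a) (ev G w)"

fun nf :: "'g el \<Rightarrow> 'g gen list" where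
  "nf One = []" | "nf Zero = [Zgen]" | "nf (Gg g) = [GE g]" | "nf (Nn n) = [NB n]"
| "nf (Hh g) = [Hgen, GE g]"

lemma alph_simps [simp]:
  "GE g \<in> MGN_alph G N \<longleftrightarrow> g \<in> carrier G"
  "NB g \<in> MGN_alph G N \<longleftrightarrow> g \<in> N"
  "Hgen \<in> MGN_alph G N" "Zgen \<in> MGN_alph G N"
  by (auto simp: MGN_alph_def)

context normal
begin

abbreviation "AA \<equiv> MGN_alph G H"
abbreviation "RR \<equiv> MGN_rels G H"
abbreviation "peq \<equiv> pres_eq AA RR"

lemma Nsub: "H \<subseteq> carrier G" by (rule subset)

lemma CmG_monoid: "monoid (Cm G H)"
  by (rule Cm_monoid) (auto simp: is_monoid subset)

lemma rels_lists: "(l, r) \<in> RR \<Longrightarrow> l \<in> lists AA \<and> r \<in> lists AA"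
proof -
  have Hs: "\<And>n. n \<in> H \<Longrightarrow> n \<in> carrier G" using subset by blast
  have Hm: "\<And>a b. a \<in> H \<Longrightarrow> b \<in> H \<Longrightarrow> a \<otimes> b \<in> H" by (rule subgroup.m_closed[OF subgroup_axioms])
  show "(l, r) \<in> RR \<Longrightarrow> l \<in> lists AA \<and> r \<in> lists AA"
  unfolding MGN_rels_def
  apply (elim UnE insertE emptyE)
  apply (simp_all only: mem_Collect_eq prod.inject)
  apply (elim exE conjE; simp add: Hs Hm)+
  done
qed
lemma peq_lists: "peq w w' \<Longrightarrow> w \<in> lists AA \<and> w' \<in> lists AA"
  by (induction rule: pres_eq.induct) (auto dest: rels_lists)

lemma evg_in: "a \<in> AA \<Longrightarrow> evg G a \<in> Cset G H"
  by (cases a) (auto simp: MGN_alph_def)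

lemma ev_in: "w \<in> lists AA \<Longrightarrow> ev G w \<in> Cset G H"
proof (induction w)
  case Nil then show ?case by simp
next
  case (Cons a w)
  then show ?case using evg_in[of a] monoid.m_closed[OF CmG_monoid]
    by (auto simp: Cm_def)
qed

lemma ev_append: "x \<in> lists AA \<Longrightarrow> y \<in> lists AA \<Longrightarrow> ev G (x @ y) = cmul G (ev G x) (ev G y)"
proof (induction x)
  case Nil then show ?case by simp
next
  case (Cons a x)
  then show ?case using evg_in[of a] ev_in[of x] ev_in[of y] monoid.m_assoc[OF CmG_monoid]
    by (auto simp: Cm_def)
qed

lemma ev_rel: "(l, r) \<in> RR \<Longrightarrow> ev G l = ev G r"
  unfolding MGN_rels_def
  apply (elim UnE insertE emptyE)
  apply (simp_all only: mem_Collect_eq prod.inject)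
  apply (elim exE conjE; simp add: subsetD[OF subset])+
  done

lemma ev_peq: "peq w w' \<Longrightarrow> ev G w = ev G w'"
proof (induction rule: pres_eq.induct)
  case (pres_rel l r u v)
  then show ?case using rels_lists[OF pres_rel(1)] ev_rel[OF pres_rel(1)]
    by (simp add: ev_append)
qed auto

lemma nf_lists: "x \<in> Cset G H \<Longrightarrow> nf x \<in> lists AA"
  by (cases rule: Cset_cases) auto

lemma ev_nf: "x \<in> Cset G H \<Longrightarrow> ev G (nf x) = x"
  by (cases rule: Cset_cases) auto

lemma peq_cong: "peq w w' \<Longrightarrow> u \<in> lists AA \<Longrightarrow> v \<in> lists AA \<Longrightarrow> peq (u @ w @ v) (u @ w' @ v)"
proof (induction rule: pres_eq.induct)
  case (pres_refl w)
  then show ?case by (intro pres_eq.pres_refl) auto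
next
  case (pres_rel l r u' v')
  then show ?case using pres_eq.pres_rel[where A=AA and R=RR and l=l and r=r and u="u @ u'" and v="v' @ v"] by simp
next
  case (pres_sym w w')
  then show ?case by (auto intro: pres_eq.pres_sym)
next
  case (pres_trans w w' w'')
  then show ?case by (auto intro: pres_eq.pres_trans)
qed

lemma rstep: "(l, r) \<in> RR \<Longrightarrow> u \<in> lists AA \<Longrightarrow> v \<in> lists AA \<Longrightarrow> w = u @ l @ v \<Longrightarrow> w' = u @ r @ v \<Longrightarrow> peq w w'"
  using pres_eq.pres_rel[where A=AA and R=RR and l=l and r=r and u=u and v=v] by simp

lemma rstep': "(l, r) \<in> RR \<Longrightarrow> u \<in> lists AA \<Longrightarrow> v \<in> lists AA \<Longrightarrow> w' = u @ l @ v \<Longrightarrow> w = u @ r @ v \<Longrightarrow> peq w w'"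
  using pres_eq.pres_sym[OF pres_eq.pres_rel[where A=AA and R=RR and l=l and r=r and u=u and v=v]] by simp

lemmas ptrans = pres_eq.pres_trans[of AA RR]

lemma r_GG: "a \<in> carrier G \<Longrightarrow> b \<in> carrier G \<Longrightarrow> ([GE a, GE b], [GE (a \<otimes> b)]) \<in> RR"
  unfolding MGN_rels_def by simp
lemma r_NN: "a \<in> H \<Longrightarrow> b \<in> H \<Longrightarrow> ([NB a, NB b], [NB (a \<otimes> b)]) \<in> RR"
  unfolding MGN_rels_def by simp
lemma r_Zx: "x \<in> AA \<Longrightarrow> ([Zgen, x], [Zgen]) \<in> RR"
  unfolding MGN_rels_def by simp
lemma r_xZ: "x \<in> AA \<Longrightarrow> ([x, Zgen], [Zgen]) \<in> RR"
  unfolding MGN_rels_def by simp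
lemma r_hn: "n \<in> H \<Longrightarrow> ([Hgen, GE n], [NB n, Hgen]) \<in> RR"
  unfolding MGN_rels_def by simp
lemma r_he: "([Hgen, GE \<one>], [Hgen]) \<in> RR"
  unfolding MGN_rels_def by simp
lemma r_eh: "([NB \<one>, Hgen], [Hgen]) \<in> RR"
  unfolding MGN_rels_def by simp
lemma r_gn: "g \<in> carrier G \<Longrightarrow> n \<in> H \<Longrightarrow> ([GE g, NB n], [Zgen]) \<in> RR"
  unfolding MGN_rels_def by simp
lemma r_ng: "g \<in> carrier G \<Longrightarrow> n \<in> H \<Longrightarrow> ([NB n, GE g], [Zgen]) \<in> RR"
  unfolding MGN_rels_def by simp
lemma r_gh: "g \<in> carrier G \<Longrightarrow> ([GE g, Hgen], [Zgen]) \<in> RR"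
  unfolding MGN_rels_def by simp
lemma r_hn': "n \<in> H \<Longrightarrow> ([Hgen, NB n], [Zgen]) \<in> RR"
  unfolding MGN_rels_def by simp

lemma ZGE: "c \<in> carrier G \<Longrightarrow> peq [Zgen, GE c] [Zgen]"
  by (rule rstep[OF r_Zx[of "GE c"], of "[]" "[]"]) auto

lemma step:
  assumes a: "a \<in> AA" and x: "x \<in> Cset G H"
  shows "peq (a # nf x) (nf (cmul G (evg G a) x))"
proof -
  have refl: "\<And>w. w \<in> lists AA \<Longrightarrow> peq w w" by (rule pres_eq.pres_refl)
  have Hs: "\<And>n. n \<in> H \<Longrightarrow> n \<in> carrier G" using subset by blast
  show ?thesis
  proof (cases a)
    case (GE g)
    then have g: "g \<in> carrier G" using a by simp
    show ?thesis using x
    proof (cases rule: Cset_cases)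
      case 1 then show ?thesis using g GE by (simp add: refl)
    next
      case 2 then show ?thesis using g GE by (auto intro!: rstep[OF r_xZ[of "GE g"], of "[]" "[]"])
    next
      case (3 b) then show ?thesis using g GE by (auto intro!: rstep[OF r_GG[of g b], of "[]" "[]"])
    next
      case (4 b) then show ?thesis using g GE by (auto intro!: rstep[OF r_gn[of g b], of "[]" "[]"])
    next
      case (5 c)
      have "peq [GE g, Hgen, GE c] [Zgen, GE c]"
        using g 5 by (auto intro!: rstep[OF r_gh[of g], of "[]" "[GE c]"])
      then show ?thesis using g GE 5 ZGE[of c] by (auto intro: ptrans)
    qed
  next
    case (NB n)
    then have n: "n \<in> H" using a by simp
    show ?thesis using x
    proof (cases rule: Cset_cases)
      case 1 then show ?thesis using n NB by (simp add: refl)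
    next
      case 2 then show ?thesis using n NB by (auto intro!: rstep[OF r_xZ[of "NB n"], of "[]" "[]"])
    next
      case (3 b) then show ?thesis using n NB by (auto intro!: rstep[OF r_ng[of b n], of "[]" "[]"])
    next
      case (4 b) then show ?thesis using n NB by (auto intro!: rstep[OF r_NN[of n b], of "[]" "[]"])
    next
      case (5 c)
      have "peq [NB n, Hgen, GE c] [Hgen, GE n, GE c]"
        using n 5 Hs[OF n] by (auto intro!: rstep'[OF r_hn[of n], of "[]" "[GE c]"])
      moreover have "peq [Hgen, GE n, GE c] [Hgen, GE (n \<otimes> c)]"
        using n 5 Hs[OF n] by (auto intro!: rstep[OF r_GG[of n c], of "[Hgen]" "[]"])
      ultimately show ?thesis using n NB 5 by (auto intro: ptrans)
    qed
  next
    case Hgen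
    show ?thesis using x
    proof (cases rule: Cset_cases)
      case 1 then show ?thesis using Hgen by (auto intro!: rstep'[OF r_he, of "[]" "[]"])
    next
      case 2 then show ?thesis using Hgen by (auto intro!: rstep[OF r_xZ[of "Hgen"], of "[]" "[]"])
    next
      case (3 b) then show ?thesis using Hgen by (simp add: refl)
    next
      case (4 b) then show ?thesis using Hgen by (auto intro!: rstep[OF r_hn'[of b], of "[]" "[]"])
    next
      case (5 c)
      have "peq [Hgen, Hgen, GE c] [Hgen, NB \<one>, Hgen, GE c]"
        using 5 by (auto intro!: rstep'[OF r_eh, of "[Hgen]" "[GE c]"])
      moreover have "peq [Hgen, NB \<one>, Hgen, GE c] [Zgen, Hgen, GE c]"
        using 5 by (auto intro!: rstep[OF r_hn'[of "\<one>"], of "[]" "[Hgen, GE c]"])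
      moreover have "peq [Zgen, Hgen, GE c] [Zgen, GE c]"
        using 5 by (auto intro!: rstep[OF r_Zx[of Hgen], of "[]" "[GE c]"])
      ultimately show ?thesis using Hgen 5 ZGE[of c] by (auto intro: ptrans)
    qed
  next
    case Zgen
    show ?thesis using x
    proof (cases rule: Cset_cases)
      case 1 then show ?thesis using Zgen by (simp add: refl)
    next
      case 2 then show ?thesis using Zgen by (auto intro!: rstep[OF r_Zx[of "Zgen"], of "[]" "[]"])
    next
      case (3 b) then show ?thesis using Zgen by (auto intro!: rstep[OF r_Zx[of "GE b"], of "[]" "[]"])
    next
      case (4 b) then show ?thesis using Zgen by (auto intro!: rstep[OF r_Zx[of "NB b"], of "[]" "[]"])
    next
      case (5 c)
      have "peq [Zgen, Hgen, GE c] [Zgen, GE c]"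
        using 5 by (auto intro!: rstep[OF r_Zx[of Hgen], of "[]" "[GE c]"])
      then show ?thesis using Zgen 5 ZGE[of c] by (auto intro: ptrans)
    qed
  qed
qed

lemma peq_nf: "w \<in> lists AA \<Longrightarrow> peq w (nf (ev G w))"
proof (induction w)
  case Nil then show ?case by (auto intro: pres_eq.pres_refl)
next
  case (Cons a w)
  then have a: "a \<in> AA" and w: "w \<in> lists AA" by auto
  have "peq ([a] @ w @ []) ([a] @ nf (ev G w) @ [])"
    using Cons a w by (intro peq_cong) auto
  then have "peq (a # w) (a # nf (ev G w))" by simp
  moreover have "peq (a # nf (ev G w)) (nf (cmul G (evg G a) (ev G w)))"
    by (rule step[OF a ev_in[OF w]])
  ultimately show ?case by (auto intro: ptrans)
qed

end



lemma mrf_transfer: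
  assumes iso: "\<Phi> \<in> iso A B" and one: "\<Phi> \<one>\<^bsub>A\<^esub> = \<one>\<^bsub>B\<^esub>" and rf: "monoid_res_finite B"
  shows "monoid_res_finite A"
  unfolding monoid_res_finite_def
proof (intro ballI impI)
  fix x y assume x: "x \<in> carrier A" and y: "y \<in> carrier A" and xy: "x \<noteq> y"
  have hom: "\<Phi> \<in> hom A B" and bij: "bij_betw \<Phi> (carrier A) (carrier B)"
    using iso by (auto simp: iso_def)
  have "\<Phi> x \<noteq> \<Phi> y" using bij x y xy by (auto simp: bij_betw_def inj_on_def)
  moreover have "\<Phi> x \<in> carrier B" "\<Phi> y \<in> carrier B" using hom x y by (auto simp: hom_def)
  ultimately obtain F :: "nat monoid" and f where F: "monoid F" "finite (carrier F)" "f \<in> hom B F"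
      "f \<one>\<^bsub>B\<^esub> = \<one>\<^bsub>F\<^esub>" "f (\<Phi> x) \<noteq> f (\<Phi> y)"
    using rf unfolding monoid_res_finite_def by blast
  show "\<exists>(F :: nat monoid) f. monoid F \<and> finite (carrier F) \<and> f \<in> hom A F
            \<and> f \<one>\<^bsub>A\<^esub> = \<one>\<^bsub>F\<^esub> \<and> f x \<noteq> f y"
    using F hom_compose[OF hom F(3)] one by (intro exI[of _ F] exI[of _ "f \<circ> \<Phi>"]) auto
qed

lemma greenL_iso:
  assumes A: "monoid A" and iso: "\<Phi> \<in> iso A B" and x: "x \<in> carrier A" and y: "y \<in> carrier A"
  shows "(\<Phi> x, \<Phi> y) \<in> greenL B \<longleftrightarrow> (x, y) \<in> greenL A"
proof -
  have hom: "\<Phi> \<in> hom A B" and bij: "bij_betw \<Phi> (carrier A) (carrier B)"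
    using iso by (auto simp: iso_def)
  have inj: "inj_on \<Phi> (carrier A)" and sur: "\<Phi> ` carrier A = carrier B"
    using bij by (auto simp: bij_betw_def)
  have img: "(\<lambda>m. m \<otimes>\<^bsub>B\<^esub> \<Phi> z) ` carrier B = \<Phi> ` ((\<lambda>m. m \<otimes>\<^bsub>A\<^esub> z) ` carrier A)"
    if z: "z \<in> carrier A" for z
  proof -
    have "(\<lambda>m. m \<otimes>\<^bsub>B\<^esub> \<Phi> z) ` carrier B = (\<lambda>m. \<Phi> m \<otimes>\<^bsub>B\<^esub> \<Phi> z) ` carrier A"
      by (simp add: sur[symmetric] image_image)
    also have "\<dots> = (\<lambda>m. \<Phi> (m \<otimes>\<^bsub>A\<^esub> z)) ` carrier A"
      using hom z by (intro image_cong) (auto simp: hom_mult)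
    also have "\<dots> = \<Phi> ` ((\<lambda>m. m \<otimes>\<^bsub>A\<^esub> z) ` carrier A)" by (simp add: image_image)
    finally show ?thesis .
  qed
  have sub: "(\<lambda>m. m \<otimes>\<^bsub>A\<^esub> z) ` carrier A \<subseteq> carrier A" if "z \<in> carrier A" for z
    using A that by (auto simp: monoid.m_closed)
  have "\<Phi> x \<in> carrier B" "\<Phi> y \<in> carrier B" using hom x y by (auto simp: hom_def)
  then show ?thesis
    unfolding greenL_def using img[OF x] img[OF y] inj_on_image_eq_iff[OF inj sub[OF x] sub[OF y]] x y
    by auto
qed

lemma Lrf_transfer:
  assumes A: "monoid A" and iso: "\<Phi> \<in> iso A B" and rf: "L_action_res_finite B"
  shows "L_action_res_finite A"
  unfolding L_action_res_finite_def
proof (intro ballI impI)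
  fix s t assume s: "s \<in> carrier A" and t: "t \<in> carrier A" and st: "(s, t) \<notin> greenL A"
  have hom: "\<Phi> \<in> hom A B" and bij: "bij_betw \<Phi> (carrier A) (carrier B)"
    using iso by (auto simp: iso_def)
  have inj: "inj_on \<Phi> (carrier A)" and sur: "\<Phi> ` carrier A = carrier B"
    using bij by (auto simp: bij_betw_def)
  have PhiC: "\<And>x. x \<in> carrier A \<Longrightarrow> \<Phi> x \<in> carrier B" using hom by (auto simp: hom_def)
  have mul: "\<And>x y. x \<in> carrier A \<Longrightarrow> y \<in> carrier A \<Longrightarrow> \<Phi> (x \<otimes>\<^bsub>A\<^esub> y) = \<Phi> x \<otimes>\<^bsub>B\<^esub> \<Phi> y"
    using hom by (simp add: hom_mult)
  have "(\<Phi> s, \<Phi> t) \<notin> greenL B" using greenL_iso[OF A iso s t] st by simp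
  then obtain \<rho> where rho: "right_congruence B \<rho>" "finite (carrier B // \<rho>)" "greenL B \<subseteq> \<rho>"
    "(\<Phi> s, \<Phi> t) \<notin> \<rho>"
    using rf PhiC[OF s] PhiC[OF t] unfolding L_action_res_finite_def by blast
  have eq: "equiv (carrier B) \<rho>" and comp: "\<And>s t m. (s, t) \<in> \<rho> \<Longrightarrow> m \<in> carrier B \<Longrightarrow> (s \<otimes>\<^bsub>B\<^esub> m, t \<otimes>\<^bsub>B\<^esub> m) \<in> \<rho>"
    using rho(1) unfolding right_congruence_def by auto
  define \<sigma> where "\<sigma> = {(x, y). x \<in> carrier A \<and> y \<in> carrier A \<and> (\<Phi> x, \<Phi> y) \<in> \<rho>}"
  have eqA: "equiv (carrier A) \<sigma>"
    using eq PhiC unfolding \<sigma>_def equiv_def refl_on_def sym_def trans_def by blast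
  have rcA: "right_congruence A \<sigma>"
    unfolding right_congruence_def
  proof (intro conjI allI impI eqA)
    fix x y m assume "(x, y) \<in> \<sigma>" "m \<in> carrier A"
    then show "(x \<otimes>\<^bsub>A\<^esub> m, y \<otimes>\<^bsub>A\<^esub> m) \<in> \<sigma>"
      using comp[of "\<Phi> x" "\<Phi> y" "\<Phi> m"] PhiC mul A by (auto simp: \<sigma>_def monoid.m_closed)
  qed
  have "carrier A // \<sigma> \<subseteq> (\<lambda>C. {y \<in> carrier A. \<Phi> y \<in> C}) ` (carrier B // \<rho>)"
  proof
    fix X assume "X \<in> carrier A // \<sigma>"
    then obtain x where x: "x \<in> carrier A" "X = \<sigma> `` {x}" by (auto elim: quotientE)
    have "X = {y \<in> carrier A. \<Phi> y \<in> \<rho> `` {\<Phi> x}}" using x by (auto simp: \<sigma>_def)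
    moreover have "\<rho> `` {\<Phi> x} \<in> carrier B // \<rho>" using PhiC[OF x(1)] by (rule quotientI)
    ultimately show "X \<in> (\<lambda>C. {y \<in> carrier A. \<Phi> y \<in> C}) ` (carrier B // \<rho>)" by blast
  qed
  then have fin: "finite (carrier A // \<sigma>)" using rho(2) by (meson finite_imageI finite_subset)
  have gl: "greenL A \<subseteq> \<sigma>"
  proof
    fix p assume p: "p \<in> greenL A"
    obtain x y where p': "p = (x, y)" by (cases p)
    then have xy: "x \<in> carrier A" "y \<in> carrier A" using p by (auto simp: greenL_def)
    then have "(\<Phi> x, \<Phi> y) \<in> greenL B" using greenL_iso[OF A iso xy] p p' by simp
    then show "p \<in> \<sigma>" using rho(3) xy p' by (auto simp: \<sigma>_def)
  qed
  have "(s, t) \<notin> \<sigma>" using rho(4) by (simp add: \<sigma>_def)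
  then show "\<exists>\<rho>. right_congruence A \<rho> \<and> finite (carrier A // \<rho>) \<and> greenL A \<subseteq> \<rho> \<and> (s, t) \<notin> \<rho>"
    using rcA fin gl by blast
qed

context normal
begin

definition Phi :: "'a el \<Rightarrow> 'a gen list set" where
  "Phi x = pres_class AA RR (nf x)"

lemma peq_refl: "w \<in> lists AA \<Longrightarrow> peq w w" by (rule pres_eq.pres_refl)

lemma class_eq:
  assumes "w \<in> lists AA" "w' \<in> lists AA"
  shows "pres_class AA RR w = pres_class AA RR w' \<longleftrightarrow> peq w w'"
proof
  assume "pres_class AA RR w = pres_class AA RR w'"
  moreover have "w' \<in> pres_class AA RR w'" using assms by (simp add: pres_class_def peq_refl)
  ultimately show "peq w w'" unfolding pres_class_def by blast
next
  assume "peq w w'"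
  then show "pres_class AA RR w = pres_class AA RR w'"
    unfolding pres_class_def by (auto intro: pres_eq.pres_trans pres_eq.pres_sym)
qed

lemma mult_class:
  assumes u: "u \<in> lists AA" and v: "v \<in> lists AA"
  shows "mult (MGN G H) (pres_class AA RR u) (pres_class AA RR v) = pres_class AA RR (u @ v)"
proof -
  have "peq (u @ v) w" if "peq u x" "peq v y" "peq (x @ y) w" for x y w
  proof -
    have x: "x \<in> lists AA" and y: "y \<in> lists AA" using peq_lists that by auto
    have "peq ([] @ u @ v) ([] @ x @ v)" using that(1) v by (intro peq_cong) auto
    moreover have "peq (x @ v @ []) (x @ y @ [])" using that(2) x by (intro peq_cong) auto
    ultimately show ?thesis using that(3) by (auto intro: pres_eq.pres_trans)
  qed
  moreover have "\<exists>x. peq u x \<and> (\<exists>y. peq v y \<and> peq (x @ y) w)" if "peq (u @ v) w" for w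
    using that u v by (blast intro: peq_refl)
  ultimately show ?thesis
    unfolding MGN_def presented_monoid_def pres_class_def by auto
qed

lemma carrier_MGN: "carrier (MGN G H) = pres_class AA RR ` lists AA"
  by (simp add: MGN_def presented_monoid_def)

lemma one_MGN: "one (MGN G H) = pres_class AA RR []"
  by (simp add: MGN_def presented_monoid_def)

lemma Phi_iso: "Phi \<in> iso (Cm G H) (MGN G H)"
proof (rule isoI)
  show "Phi \<in> hom (Cm G H) (MGN G H)"
  proof (rule homI)
    fix x assume "x \<in> carrier (Cm G H)"
    then show "Phi x \<in> carrier (MGN G H)"
      by (auto simp: Cm_def Phi_def carrier_MGN nf_lists)
  next
    fix x y assume x: "x \<in> carrier (Cm G H)" and y: "y \<in> carrier (Cm G H)"
    then have x': "x \<in> Cset G H" and y': "y \<in> Cset G H" by (auto simp: Cm_def)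
    have l: "nf x @ nf y \<in> lists AA" using nf_lists x' y' by auto
    have "ev G (nf x @ nf y) = cmul G x y"
      using ev_append nf_lists x' y' ev_nf by simp
    then have "peq (nf x @ nf y) (nf (cmul G x y))" using peq_nf[OF l] by simp
    then have "pres_class AA RR (nf (cmul G x y)) = pres_class AA RR (nf x @ nf y)"
      using class_eq l peq_lists by (metis pres_eq.pres_sym)
    then show "Phi (x \<otimes>\<^bsub>Cm G H\<^esub> y) = Phi x \<otimes>\<^bsub>MGN G H\<^esub> Phi y"
      using mult_class nf_lists x' y' by (simp add: Cm_def Phi_def)
  qed
next
  show "bij_betw Phi (carrier (Cm G H)) (carrier (MGN G H))"
    unfolding bij_betw_def
  proof
    show "inj_on Phi (carrier (Cm G H))"
    proof (rule inj_onI)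
      fix x y assume x: "x \<in> carrier (Cm G H)" and y: "y \<in> carrier (Cm G H)" and e: "Phi x = Phi y"
      then have x': "x \<in> Cset G H" and y': "y \<in> Cset G H" by (auto simp: Cm_def)
      have "peq (nf x) (nf y)" using e class_eq nf_lists x' y' by (simp add: Phi_def)
      then have "ev G (nf x) = ev G (nf y)" by (rule ev_peq)
      then show "x = y" using ev_nf x' y' by simp
    qed
  next
    show "Phi ` carrier (Cm G H) = carrier (MGN G H)"
    proof
      show "Phi ` carrier (Cm G H) \<subseteq> carrier (MGN G H)"
        by (auto simp: Cm_def Phi_def carrier_MGN nf_lists)
    next
      show "carrier (MGN G H) \<subseteq> Phi ` carrier (Cm G H)"
      proof
        fix X assume "X \<in> carrier (MGN G H)"
        then obtain w where w: "w \<in> lists AA" "X = pres_class AA RR w" by (auto simp: carrier_MGN)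
        have "X = Phi (ev G w)"
          using w peq_nf[OF w(1)] class_eq[OF w(1) nf_lists[OF ev_in[OF w(1)]]] by (simp add: Phi_def)
        moreover have "ev G w \<in> carrier (Cm G H)" using ev_in[OF w(1)] by (simp add: Cm_def)
        ultimately show "X \<in> Phi ` carrier (Cm G H)" by blast
      qed
    qed
  qed
qed

lemma Phi_one: "Phi \<one>\<^bsub>Cm G H\<^esub> = \<one>\<^bsub>MGN G H\<^esub>"
  by (simp add: Cm_def Phi_def one_MGN)

lemma MGN_monoid: "monoid (MGN G H)"
  by (rule monoid_iso_transfer[OF CmG_monoid Phi_iso Phi_one])

lemma transfer_main:
  "monoid_res_finite (MGN G H) \<longleftrightarrow> monoid_res_finite (Cm G H)"
  "L_action_res_finite (MGN G H) \<longleftrightarrow> L_action_res_finite (Cm G H)"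
proof -
  have iso2: "inv_into (carrier (Cm G H)) Phi \<in> iso (MGN G H) (Cm G H)"
    by (rule iso_sym_gen[OF Phi_iso CmG_monoid])
  have one2: "inv_into (carrier (Cm G H)) Phi \<one>\<^bsub>MGN G H\<^esub> = \<one>\<^bsub>Cm G H\<^esub>"
    by (rule iso_one_inv[OF Phi_iso CmG_monoid Phi_one])
  show "monoid_res_finite (MGN G H) \<longleftrightarrow> monoid_res_finite (Cm G H)"
    using mrf_transfer[OF Phi_iso Phi_one] mrf_transfer[OF iso2 one2] by blast
  show "L_action_res_finite (MGN G H) \<longleftrightarrow> L_action_res_finite (Cm G H)"
    using Lrf_transfer[OF CmG_monoid Phi_iso] Lrf_transfer[OF MGN_monoid iso2] by blast
qed

end



definition triv :: "nat monoid" where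
  "triv = \<lparr>carrier = {0}, mult = (\<lambda>_ _. 0), one = 0\<rparr>"

lemma triv_group: "group triv"
  unfolding triv_def by (rule groupI) auto

lemma triv_fin: "finite (carrier triv)"
  unfolding triv_def by simp

lemma triv_hom: "(\<lambda>_. 0) \<in> hom G triv"
  by (auto simp: hom_def triv_def)

lemma map_el_Cset:
  assumes "\<phi> \<in> hom G K" "x \<in> Cset G N"
  shows "map_el \<phi> x \<in> Cset K (\<phi> ` N)"
  using assms(2) by (cases rule: Cset_cases) (auto simp: hom_in_carrier[OF assms(1)])

lemma map_el_mult:
  assumes "\<phi> \<in> hom G K" "N \<subseteq> carrier G" "x \<in> Cset G N" "y \<in> Cset G N"
  shows "map_el \<phi> (cmul G x y) = cmul K (map_el \<phi> x) (map_el \<phi> y)"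
  using assms(3,4) assms(2)
  by (cases rule: Cset_cases[OF assms(3)]; cases rule: Cset_cases[OF assms(4)])
     (auto simp: hom_mult[OF assms(1)] subsetD)

lemma tag_sep:
  assumes "x \<noteq> y" "\<not> (\<exists>a b. a \<noteq> b \<and> ((x = Gg a \<and> y = Gg b) \<or> (x = Nn a \<and> y = Nn b) \<or> (x = Hh a \<and> y = Hh b)))"
  shows "map_el (\<lambda>_. 0::nat) x \<noteq> map_el (\<lambda>_. 0) y"
  using assms by (cases x; cases y) auto

context normal
begin

lemma Hs: "n \<in> H \<Longrightarrow> n \<in> carrier G" using subset by blast
lemma Hm: "a \<in> H \<Longrightarrow> b \<in> H \<Longrightarrow> a \<otimes> b \<in> H" by (rule subgroup.m_closed[OF subgroup_axioms])

lemma rf_Cm_imp_G: "monoid_res_finite (Cm G H) \<Longrightarrow> group_res_finite G"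
  unfolding group_res_finite_def
proof (intro ballI impI)
  assume rf: "monoid_res_finite (Cm G H)"
  fix x y assume x: "x \<in> carrier G" and y: "y \<in> carrier G" and xy: "x \<noteq> y"
  have "Gg x \<in> carrier (Cm G H)" "Gg y \<in> carrier (Cm G H)" "Gg x \<noteq> Gg y"
    using x y xy by (auto simp: Cm_def)
  then obtain F :: "nat monoid" and f where F: "monoid F" "finite (carrier F)" "f \<in> hom (Cm G H) F"
      "f (Gg x) \<noteq> f (Gg y)"
    using rf unfolding monoid_res_finite_def by blast
  interpret F: monoid F by fact
  have fc: "\<And>a. a \<in> carrier G \<Longrightarrow> f (Gg a) \<in> carrier F"
    using F(3) by (auto simp: hom_def Cm_def)
  have fm: "\<And>a b. a \<in> carrier G \<Longrightarrow> b \<in> carrier G \<Longrightarrow> f (Gg a) \<otimes>\<^bsub>F\<^esub> f (Gg b) = f (Gg (a \<otimes> b))"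
  proof -
    fix a b assume "a \<in> carrier G" "b \<in> carrier G"
    then have "f (Gg a \<otimes>\<^bsub>Cm G H\<^esub> Gg b) = f (Gg a) \<otimes>\<^bsub>F\<^esub> f (Gg b)"
      using F(3) by (intro hom_mult) (auto simp: Cm_def)
    then show "f (Gg a) \<otimes>\<^bsub>F\<^esub> f (Gg b) = f (Gg (a \<otimes> b))" by (simp add: Cm_def)
  qed
  define K :: "nat monoid" where "K = \<lparr>carrier = (\<lambda>g. f (Gg g)) ` carrier G, mult = mult F, one = f (Gg \<one>)\<rparr>"
  have gK: "group K"
  proof (rule groupI)
    fix a b assume "a \<in> carrier K" "b \<in> carrier K"
    then show "a \<otimes>\<^bsub>K\<^esub> b \<in> carrier K" by (auto simp: K_def fm)
  next
    show "\<one>\<^bsub>K\<^esub> \<in> carrier K" by (auto simp: K_def)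
  next
    fix a b c assume "a \<in> carrier K" "b \<in> carrier K" "c \<in> carrier K"
    then show "a \<otimes>\<^bsub>K\<^esub> b \<otimes>\<^bsub>K\<^esub> c = a \<otimes>\<^bsub>K\<^esub> (b \<otimes>\<^bsub>K\<^esub> c)"
      by (auto simp: K_def fc F.m_assoc)
  next
    fix a assume "a \<in> carrier K"
    then show "\<one>\<^bsub>K\<^esub> \<otimes>\<^bsub>K\<^esub> a = a" by (auto simp: K_def fm)
  next
    fix a assume "a \<in> carrier K"
    then obtain g where g: "g \<in> carrier G" "a = f (Gg g)" by (auto simp: K_def)
    then show "\<exists>b\<in>carrier K. b \<otimes>\<^bsub>K\<^esub> a = \<one>\<^bsub>K\<^esub>"
      by (intro bexI[of _ "f (Gg (inv g))"]) (auto simp: K_def fm)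
  qed
  have "carrier K \<subseteq> carrier F" using fc by (auto simp: K_def)
  then have finK: "finite (carrier K)" using F(2) by (rule finite_subset)
  have hK: "(\<lambda>g. f (Gg g)) \<in> hom G K"
    by (rule homI) (auto simp: K_def fm)
  show "\<exists>(F :: nat monoid) f. group F \<and> finite (carrier F) \<and> f \<in> hom G F \<and> f x \<noteq> f y"
    using gK finK hK F(4) by blast
qed

lemma rf_G_imp_Cm: "group_res_finite G \<Longrightarrow> monoid_res_finite (Cm G H)"
  unfolding monoid_res_finite_def
proof (intro ballI impI)
  assume rf: "group_res_finite G"
  fix x y assume x: "x \<in> carrier (Cm G H)" and y: "y \<in> carrier (Cm G H)" and xy: "x \<noteq> y"
  then have x': "x \<in> Cset G H" and y': "y \<in> Cset G H" by (auto simp: Cm_def)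
  obtain K :: "nat monoid" and \<phi> where K: "group K" "finite (carrier K)" "\<phi> \<in> hom G K"
    and sep: "map_el \<phi> x \<noteq> map_el \<phi> y"
  proof (cases "\<exists>a b. a \<in> carrier G \<and> b \<in> carrier G \<and> a \<noteq> b \<and>
      ((x = Gg a \<and> y = Gg b) \<or> (x = Nn a \<and> y = Nn b) \<or> (x = Hh a \<and> y = Hh b))")
    case True
    then obtain a b where ab: "a \<in> carrier G" "b \<in> carrier G" "a \<noteq> b"
      "(x = Gg a \<and> y = Gg b) \<or> (x = Nn a \<and> y = Nn b) \<or> (x = Hh a \<and> y = Hh b)" by blast
    have "\<exists>(F :: nat monoid) f. group F \<and> finite (carrier F) \<and> f \<in> hom G F \<and> f a \<noteq> f b"
      using rf[unfolded group_res_finite_def, rule_format, OF ab(1) ab(2) ab(3)] .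
    then obtain K :: "nat monoid" and \<phi> where Kp: "group K" "finite (carrier K)" "\<phi> \<in> hom G K" "\<phi> a \<noteq> \<phi> b"
      by blast
    have "map_el \<phi> x \<noteq> map_el \<phi> y" using ab(4) Kp(4) by auto
    then show ?thesis by (rule that[OF Kp(1-3)])
  next
    case False
    have nc: "\<not> (\<exists>a b. a \<noteq> b \<and> ((x = Gg a \<and> y = Gg b) \<or> (x = Nn a \<and> y = Nn b) \<or> (x = Hh a \<and> y = Hh b)))"
    proof
      assume "\<exists>a b. a \<noteq> b \<and> ((x = Gg a \<and> y = Gg b) \<or> (x = Nn a \<and> y = Nn b) \<or> (x = Hh a \<and> y = Hh b))"
      then obtain a b where ab: "a \<noteq> b" "(x = Gg a \<and> y = Gg b) \<or> (x = Nn a \<and> y = Nn b) \<or> (x = Hh a \<and> y = Hh b)"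
        by blast
      then have "a \<in> carrier G \<and> b \<in> carrier G" using x' y' Hs by auto
      then show False using False ab by blast
    qed
    have "map_el (\<lambda>_. 0::nat) x \<noteq> map_el (\<lambda>_. 0) y"
      using tag_sep[OF xy nc] .
    then show ?thesis by (rule that[OF triv_group triv_fin triv_hom])
  qed
  interpret K: group K by fact
  let ?N = "\<phi> ` H"
  have NK: "?N \<subseteq> carrier K" using K(3) Hs by (auto simp: hom_in_carrier)
  have Nm: "\<And>a b. a \<in> ?N \<Longrightarrow> b \<in> ?N \<Longrightarrow> a \<otimes>\<^bsub>K\<^esub> b \<in> ?N"
  proof -
    fix a b assume "a \<in> ?N" "b \<in> ?N"
    then obtain c d where cd: "c \<in> H" "d \<in> H" "a = \<phi> c" "b = \<phi> d" by blast
    then have "a \<otimes>\<^bsub>K\<^esub> b = \<phi> (c \<otimes> d)" using hom_mult[OF K(3)] Hs by simp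
    moreover have "c \<otimes> d \<in> H" using cd Hm by simp
    ultimately show "a \<otimes>\<^bsub>K\<^esub> b \<in> ?N" by blast
  qed
  have mon: "monoid (Cm K ?N)" by (rule Cm_monoid[OF K.is_monoid NK Nm])
  have fin: "finite (carrier (Cm K ?N))"
  proof -
    have "finite ?N" using K(2) NK by (rule finite_subset[rotated])
    then show ?thesis using K(2) by (simp add: Cm_def Cset_def)
  qed
  have hm: "map_el \<phi> \<in> hom (Cm G H) (Cm K ?N)"
  proof (rule homI)
    fix z assume "z \<in> carrier (Cm G H)"
    then show "map_el \<phi> z \<in> carrier (Cm K ?N)" using map_el_Cset[OF K(3)] by (simp add: Cm_def)
  next
    fix z w assume "z \<in> carrier (Cm G H)" "w \<in> carrier (Cm G H)"
    then show "map_el \<phi> (z \<otimes>\<^bsub>Cm G H\<^esub> w) = map_el \<phi> z \<otimes>\<^bsub>Cm K ?N\<^esub> map_el \<phi> w"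
      using map_el_mult[OF K(3) subset] by (simp add: Cm_def)
  qed
  obtain F :: "nat monoid" and e where F: "monoid F" "finite (carrier F)" "e \<in> iso (Cm K ?N) F"
     "e \<one>\<^bsub>Cm K ?N\<^esub> = \<one>\<^bsub>F\<^esub>"
    using nat_copy[OF mon fin] by blast
  have inj: "inj_on e (carrier (Cm K ?N))" using F(3) by (simp add: iso_def bij_betw_def)
  have "map_el \<phi> x \<in> carrier (Cm K ?N)" "map_el \<phi> y \<in> carrier (Cm K ?N)"
    using map_el_Cset[OF K(3)] x' y' by (auto simp: Cm_def)
  then have "(e \<circ> map_el \<phi>) x \<noteq> (e \<circ> map_el \<phi>) y" using inj sep by (auto simp: inj_on_def)
  moreover have "(e \<circ> map_el \<phi>) \<in> hom (Cm G H) F"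
    using Group.hom_compose[OF hm] F(3) unfolding iso_def by blast
  moreover have "(e \<circ> map_el \<phi>) \<one>\<^bsub>Cm G H\<^esub> = \<one>\<^bsub>F\<^esub>" using F(4) by (simp add: Cm_def)
  ultimately show "\<exists>(F :: nat monoid) f. monoid F \<and> finite (carrier F) \<and> f \<in> hom (Cm G H) F
            \<and> f \<one>\<^bsub>Cm G H\<^esub> = \<one>\<^bsub>F\<^esub> \<and> f x \<noteq> f y"
    using F(1,2) by blast
qed

end



lemma equiv_kernel: "equiv A {(x, y). x \<in> A \<and> y \<in> A \<and> f x = f y}"
  unfolding equiv_def refl_on_def sym_def trans_def by auto

lemma quot_kernel_finite:
  assumes "finite (f ` A)"
  shows "finite (A // {(x, y). x \<in> A \<and> y \<in> A \<and> f x = f y})"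
proof -
  have "A // {(x, y). x \<in> A \<and> y \<in> A \<and> f x = f y} \<subseteq> (\<lambda>v. {y \<in> A. f y = v}) ` (f ` A)"
  proof
    fix X assume "X \<in> A // {(x, y). x \<in> A \<and> y \<in> A \<and> f x = f y}"
    then obtain x where x: "x \<in> A" "X = {(x, y). x \<in> A \<and> y \<in> A \<and> f x = f y} `` {x}"
      by (auto elim: quotientE)
    then have "X = {y \<in> A. f y = f x}" by auto
    then show "X \<in> (\<lambda>v. {y \<in> A. f y = v}) ` (f ` A)" using x(1) by blast
  qed
  then show ?thesis using assms by (meson finite_imageI finite_subset)
qed

lemma act_sep:
  assumes K: "group K" and Q: "finite Q"
    and cl: "\<And>q c. q \<in> Q \<Longrightarrow> c \<in> carrier K \<Longrightarrow> act q c \<in> Q"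
    and one: "\<And>q. q \<in> Q \<Longrightarrow> act q \<one>\<^bsub>K\<^esub> = q"
    and comp: "\<And>q c d. q \<in> Q \<Longrightarrow> c \<in> carrier K \<Longrightarrow> d \<in> carrier K \<Longrightarrow> act (act q c) d = act q (c \<otimes>\<^bsub>K\<^esub> d)"
  shows "\<exists>(F :: nat monoid) f. group F \<and> finite (carrier F) \<and> f \<in> hom K F \<and>
           (\<forall>q\<in>Q. \<forall>c\<in>carrier K. \<forall>d\<in>carrier K. act q c \<noteq> act q d \<longrightarrow> f c \<noteq> f d)"
proof -
  interpret K: group K by fact
  define \<Psi> where "\<Psi> c = (\<lambda>q\<in>Q. act q (inv\<^bsub>K\<^esub> c))" for c
  have inv_act: "act (act q (inv\<^bsub>K\<^esub> c)) c = q" "act (act q c) (inv\<^bsub>K\<^esub> c) = q"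
    if "q \<in> Q" "c \<in> carrier K" for q c
    using that comp one by auto
  have PsiB: "\<Psi> c \<in> Bij Q" if c: "c \<in> carrier K" for c
  proof -
    have "bij_betw (\<Psi> c) Q Q"
    proof (rule bij_betw_byWitness[where f' = "\<Psi> (inv\<^bsub>K\<^esub> c)"])
      show "\<forall>a\<in>Q. \<Psi> (inv\<^bsub>K\<^esub> c) (\<Psi> c a) = a"
        using c cl inv_act by (simp add: \<Psi>_def)
      show "\<forall>a\<in>Q. \<Psi> c (\<Psi> (inv\<^bsub>K\<^esub> c) a) = a"
        using c cl inv_act by (simp add: \<Psi>_def)
      show "\<Psi> c ` Q \<subseteq> Q" using c cl by (auto simp: \<Psi>_def)
      show "\<Psi> (inv\<^bsub>K\<^esub> c) ` Q \<subseteq> Q" using c cl by (auto simp: \<Psi>_def)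
    qed
    then show ?thesis by (simp add: Bij_def \<Psi>_def)
  qed
  have hom: "\<Psi> \<in> hom K (BijGroup Q)"
  proof (rule homI)
    fix c assume "c \<in> carrier K" then show "\<Psi> c \<in> carrier (BijGroup Q)"
      using PsiB by (simp add: BijGroup_def)
  next
    fix c d assume c: "c \<in> carrier K" and d: "d \<in> carrier K"
    have "\<Psi> (c \<otimes>\<^bsub>K\<^esub> d) = compose Q (\<Psi> c) (\<Psi> d)"
    proof (rule ext)
      fix q show "\<Psi> (c \<otimes>\<^bsub>K\<^esub> d) q = compose Q (\<Psi> c) (\<Psi> d) q"
        using c d cl comp by (auto simp: \<Psi>_def compose_def K.inv_mult_group)
    qed
    then show "\<Psi> (c \<otimes>\<^bsub>K\<^esub> d) = \<Psi> c \<otimes>\<^bsub>BijGroup Q\<^esub> \<Psi> d"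
      using PsiB c d by (simp add: BijGroup_def)
  qed
  have finB: "finite (carrier (BijGroup Q))"
  proof -
    have "carrier (BijGroup Q) \<subseteq> Q \<rightarrow>\<^sub>E Q"
    proof
      fix f assume "f \<in> carrier (BijGroup Q)"
      then have "f \<in> extensional Q" "f ` Q = Q" by (auto simp: BijGroup_def Bij_def bij_betw_def)
      then show "f \<in> Q \<rightarrow>\<^sub>E Q" by (auto simp: PiE_def)
    qed
    moreover have "finite (Q \<rightarrow>\<^sub>E Q)" using Q by (simp add: finite_PiE)
    ultimately show ?thesis by (rule finite_subset)
  qed
  obtain F :: "nat monoid" and e where F: "monoid F" "finite (carrier F)" "e \<in> iso (BijGroup Q) F"
    "group (BijGroup Q) \<longrightarrow> group F"
    using nat_copy[OF group.is_monoid[OF group_BijGroup] finB] by blast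
  have gF: "group F" using F(4) group_BijGroup by blast
  have inj: "inj_on e (Bij Q)" using F(3) by (simp add: iso_def bij_betw_def BijGroup_def)
  have hf: "e \<circ> \<Psi> \<in> hom K F" using Group.hom_compose[OF hom] F(3) unfolding iso_def by blast
  have sep: "(e \<circ> \<Psi>) c \<noteq> (e \<circ> \<Psi>) d"
    if q: "q \<in> Q" and c: "c \<in> carrier K" and d: "d \<in> carrier K" and ne: "act q c \<noteq> act q d" for q c d
  proof
    assume "(e \<circ> \<Psi>) c = (e \<circ> \<Psi>) d"
    then have "\<Psi> c = \<Psi> d" using inj PsiB c d by (auto simp: inj_on_def)
    then have "\<Psi> d (act q c) = \<Psi> c (act q c)" by simp
    also have "\<dots> = q" using q c cl inv_act by (simp add: \<Psi>_def)
    finally have "act (act q c) (inv\<^bsub>K\<^esub> d) = q" using q c cl by (simp add: \<Psi>_def)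
    then have "act q d = act (act (act q c) (inv\<^bsub>K\<^esub> d)) d" by simp
    also have "\<dots> = act q c" using inv_act(1)[of "act q c" d] q c d cl by simp
    finally show False using ne by simp
  qed
  show ?thesis using gF F(2) hf sep by blast
qed



datatype 'c key = K1 | K0 | KG | KN | KH 'c

fun lk :: "('g,'b) monoid_scheme \<Rightarrow> 'g set \<Rightarrow> 'g el \<Rightarrow> 'g set key" where
  "lk G N One = K1" | "lk G N Zero = K0" | "lk G N (Gg a) = KG" | "lk G N (Nn a) = KN"
| "lk G N (Hh a) = KH (N #>\<^bsub>G\<^esub> a)"

lemma monoid_img_eq:
  assumes "monoid M" "x \<in> carrier M" "y \<in> carrier M"
  shows "(\<lambda>m. m \<otimes>\<^bsub>M\<^esub> x) ` carrier M = (\<lambda>m. m \<otimes>\<^bsub>M\<^esub> y) ` carrier M \<longleftrightarrow>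
         (\<exists>a\<in>carrier M. x = a \<otimes>\<^bsub>M\<^esub> y) \<and> (\<exists>b\<in>carrier M. y = b \<otimes>\<^bsub>M\<^esub> x)"
proof -
  interpret monoid M by fact
  show ?thesis
  proof
    assume e: "(\<lambda>m. m \<otimes>\<^bsub>M\<^esub> x) ` carrier M = (\<lambda>m. m \<otimes>\<^bsub>M\<^esub> y) ` carrier M"
    have "x \<in> (\<lambda>m. m \<otimes>\<^bsub>M\<^esub> x) ` carrier M" "y \<in> (\<lambda>m. m \<otimes>\<^bsub>M\<^esub> y) ` carrier M"
      using assms by (auto intro!: image_eqI[where x="\<one>\<^bsub>M\<^esub>"])
    then show "(\<exists>a\<in>carrier M. x = a \<otimes>\<^bsub>M\<^esub> y) \<and> (\<exists>b\<in>carrier M. y = b \<otimes>\<^bsub>M\<^esub> x)"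
      using e by auto
  next
    assume "(\<exists>a\<in>carrier M. x = a \<otimes>\<^bsub>M\<^esub> y) \<and> (\<exists>b\<in>carrier M. y = b \<otimes>\<^bsub>M\<^esub> x)"
    then obtain a b where a: "a \<in> carrier M" "x = a \<otimes>\<^bsub>M\<^esub> y" and b: "b \<in> carrier M" "y = b \<otimes>\<^bsub>M\<^esub> x"
      by blast
    show "(\<lambda>m. m \<otimes>\<^bsub>M\<^esub> x) ` carrier M = (\<lambda>m. m \<otimes>\<^bsub>M\<^esub> y) ` carrier M"
    proof
      show "(\<lambda>m. m \<otimes>\<^bsub>M\<^esub> x) ` carrier M \<subseteq> (\<lambda>m. m \<otimes>\<^bsub>M\<^esub> y) ` carrier M"
      proof
        fix z assume "z \<in> (\<lambda>m. m \<otimes>\<^bsub>M\<^esub> x) ` carrier M"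
        then obtain m where m: "m \<in> carrier M" "z = m \<otimes>\<^bsub>M\<^esub> x" by blast
        then have "z = (m \<otimes>\<^bsub>M\<^esub> a) \<otimes>\<^bsub>M\<^esub> y" using a assms by (simp add: m_assoc)
        moreover have "m \<otimes>\<^bsub>M\<^esub> a \<in> carrier M" using m a by simp
        ultimately show "z \<in> (\<lambda>m. m \<otimes>\<^bsub>M\<^esub> y) ` carrier M" by blast
      qed
      show "(\<lambda>m. m \<otimes>\<^bsub>M\<^esub> y) ` carrier M \<subseteq> (\<lambda>m. m \<otimes>\<^bsub>M\<^esub> x) ` carrier M"
      proof
        fix z assume "z \<in> (\<lambda>m. m \<otimes>\<^bsub>M\<^esub> y) ` carrier M"
        then obtain m where m: "m \<in> carrier M" "z = m \<otimes>\<^bsub>M\<^esub> y" by blast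
        then have "z = (m \<otimes>\<^bsub>M\<^esub> b) \<otimes>\<^bsub>M\<^esub> x" using b assms by (simp add: m_assoc)
        moreover have "m \<otimes>\<^bsub>M\<^esub> b \<in> carrier M" using m b by simp
        ultimately show "z \<in> (\<lambda>m. m \<otimes>\<^bsub>M\<^esub> x) ` carrier M" by blast
      qed
    qed
  qed
qed

context normal
begin

lemma cos_eq:
  assumes "g \<in> carrier G" "g' \<in> carrier G"
  shows "H #> g = H #> g' \<longleftrightarrow> g \<otimes> inv g' \<in> H"
proof
  assume "H #> g = H #> g'"
  then have "g \<in> H #> g'" using rcos_self[OF assms(1) subgroup_axioms] by simp
  then show "g \<otimes> inv g' \<in> H" using rcos_module_imp[OF is_group assms(2)] by simp
next
  assume "g \<otimes> inv g' \<in> H"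
  then have "g \<in> H #> g'" using rcos_module_rev[OF is_group assms(2) assms(1)] by simp
  then show "H #> g = H #> g'" using repr_independence[OF _ assms(2) subgroup_axioms] by simp
qed

lemma cos_absorb:
  assumes "n \<in> H" "c \<in> carrier G"
  shows "H #> (n \<otimes> c) = H #> c"
proof -
  have n: "n \<in> carrier G" using assms(1) Hs by simp
  have "n \<otimes> c \<otimes> inv c = n" using n assms(2) by (simp add: m_assoc)
  then show ?thesis using cos_eq[of "n \<otimes> c" c] assms n by simp
qed

lemma cos_mid:
  assumes "g \<in> carrier G" "n \<in> H" "a \<in> carrier G"
  shows "H #> (g \<otimes> (n \<otimes> a)) = H #> (g \<otimes> a)"
proof -
  have n: "n \<in> carrier G" using assms(2) Hs by simp
  have "H #> (g \<otimes> (n \<otimes> a)) = (H #> g) <#> (H #> (n \<otimes> a))"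
    using rcos_sum assms n by simp
  also have "\<dots> = (H #> g) <#> (H #> a)" using cos_absorb assms by simp
  also have "\<dots> = H #> (g \<otimes> a)" using rcos_sum assms by simp
  finally show ?thesis .
qed

lemma cmul_cl: "x \<in> Cset G H \<Longrightarrow> y \<in> Cset G H \<Longrightarrow> cmul G x y \<in> Cset G H"
  using monoid.m_closed[OF CmG_monoid] by (simp add: Cm_def)

lemma lk_ex:
  assumes x: "x \<in> Cset G H" and y: "y \<in> Cset G H" and e: "lk G H x = lk G H y"
  shows "\<exists>a\<in>Cset G H. x = cmul G a y"
  using y
proof (cases rule: Cset_cases)
  case 1 then show ?thesis using x e by (cases rule: Cset_cases[OF x]) (auto intro!: bexI[of _ One])
next
  case 2
  then have "x = Zero" using x e by (cases rule: Cset_cases[OF x]) auto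
  then show ?thesis using 2 by (intro bexI[of _ One]) auto
next
  case (3 b)
  then obtain a where a: "a \<in> carrier G" "x = Gg a" using x e by (cases rule: Cset_cases[OF x]) auto
  then show ?thesis using 3
    by (intro bexI[of _ "Gg (a \<otimes> inv b)"]) (auto simp: m_assoc)
next
  case (4 b)
  then obtain a where a: "a \<in> H" "x = Nn a" using x e by (cases rule: Cset_cases[OF x]) auto
  have "a \<otimes> inv b \<in> H" using a 4 by (simp add: subgroup.m_closed[OF subgroup_axioms] subgroup.m_inv_closed[OF subgroup_axioms])
  then show ?thesis using 4 a Hs
    by (intro bexI[of _ "Nn (a \<otimes> inv b)"]) (auto simp: m_assoc)
next
  case (5 b)
  then obtain a where a: "a \<in> carrier G" "x = Hh a" "H #> a = H #> b" using x e
    by (cases rule: Cset_cases[OF x]) auto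
  then have "a \<otimes> inv b \<in> H" using cos_eq 5 by simp
  then show ?thesis using 5 a
    by (intro bexI[of _ "Nn (a \<otimes> inv b)"]) (auto simp: m_assoc)
qed

lemma lk_mult:
  assumes y: "y \<in> Cset G H" and a: "a \<in> Cset G H" and b: "b \<in> Cset G H"
    and e: "y = cmul G b (cmul G a y)"
  shows "lk G H (cmul G a y) = lk G H y"
  using y a b e
  by (cases rule: Cset_cases[OF y]; cases rule: Cset_cases[OF a]; cases rule: Cset_cases[OF b])
     (auto simp: cos_absorb)

lemma greenL_Cm: "greenL (Cm G H) = {(x, y). x \<in> Cset G H \<and> y \<in> Cset G H \<and> lk G H x = lk G H y}"
proof -
  have "(x, y) \<in> greenL (Cm G H) \<longleftrightarrow> lk G H x = lk G H y" if x: "x \<in> Cset G H" and y: "y \<in> Cset G H" for x y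
  proof -
    have "(x, y) \<in> greenL (Cm G H) \<longleftrightarrow> (\<exists>a\<in>Cset G H. x = cmul G a y) \<and> (\<exists>b\<in>Cset G H. y = cmul G b x)"
      using monoid_img_eq[OF CmG_monoid, of x y] x y by (simp add: greenL_def Cm_def)
    also have "\<dots> \<longleftrightarrow> lk G H x = lk G H y"
    proof
      assume "(\<exists>a\<in>Cset G H. x = cmul G a y) \<and> (\<exists>b\<in>Cset G H. y = cmul G b x)"
      then obtain a b where ab: "a \<in> Cset G H" "b \<in> Cset G H" and e1: "x = cmul G a y" and e2: "y = cmul G b x" by blast
      have "y = cmul G b (cmul G a y)" using e2 unfolding e1 .
      then have "lk G H (cmul G a y) = lk G H y" by (rule lk_mult[OF y ab])
      then show "lk G H x = lk G H y" unfolding e1 .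
    next
      assume "lk G H x = lk G H y"
      then show "(\<exists>a\<in>Cset G H. x = cmul G a y) \<and> (\<exists>b\<in>Cset G H. y = cmul G b x)"
        using lk_ex x y by metis
    qed
    finally show ?thesis .
  qed
  moreover have "greenL (Cm G H) \<subseteq> Cset G H \<times> Cset G H" by (auto simp: greenL_def Cm_def)
  ultimately show ?thesis by auto
qed

end



lemma key_sep:
  assumes "k1 \<noteq> k2" "\<not> (\<exists>c d. c \<noteq> d \<and> k1 = KH c \<and> k2 = KH d)"
  shows "map_key (\<lambda>_. 0::nat) k1 \<noteq> map_key (\<lambda>_. 0) k2"
  using assms by (cases k1; cases k2) auto

context normal
begin

lemma lk_KH: "x \<in> Cset G H \<Longrightarrow> lk G H x = KH c \<Longrightarrow> c \<in> carrier (G Mod H)"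
  by (cases rule: Cset_cases) (auto simp: carrier_FactGroup)

lemma phi_mult:
  assumes "\<phi> \<in> hom (G Mod H) K" "g \<in> carrier G" "a \<in> carrier G"
  shows "\<phi> (H #> (g \<otimes> a)) = \<phi> (H #> g) \<otimes>\<^bsub>K\<^esub> \<phi> (H #> a)"
proof -
  have "H #> (g \<otimes> a) = (H #> g) \<otimes>\<^bsub>G Mod H\<^esub> (H #> a)" using rcos_sum assms by simp
  moreover have "H #> g \<in> carrier (G Mod H)" "H #> a \<in> carrier (G Mod H)"
    using assms by (auto simp: carrier_FactGroup)
  ultimately show ?thesis using hom_mult[OF assms(1)] by simp
qed

lemma kappa_compat:
  assumes h: "\<phi> \<in> hom (G Mod H) K" and x: "x \<in> Cset G H" and y: "y \<in> Cset G H" and m: "m \<in> Cset G H"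
    and e: "map_key \<phi> (lk G H x) = map_key \<phi> (lk G H y)"
  shows "map_key \<phi> (lk G H (cmul G x m)) = map_key \<phi> (lk G H (cmul G y m))"
  using x y m e
  by (cases rule: Cset_cases[OF x]; cases rule: Cset_cases[OF y]; cases rule: Cset_cases[OF m])
     (auto simp: phi_mult[OF h] cos_absorb)

lemma rfQ_imp_L:
  assumes rf: "group_res_finite (G Mod H)"
  shows "L_action_res_finite (Cm G H)"
  unfolding L_action_res_finite_def
proof (intro ballI impI)
  fix s t assume s: "s \<in> carrier (Cm G H)" and t: "t \<in> carrier (Cm G H)" and st: "(s, t) \<notin> greenL (Cm G H)"
  then have s': "s \<in> Cset G H" and t': "t \<in> Cset G H" by (auto simp: Cm_def)
  have ne: "lk G H s \<noteq> lk G H t" using st s' t' by (simp add: greenL_Cm)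
  obtain K :: "nat monoid" and \<phi> where K: "group K" "finite (carrier K)" "\<phi> \<in> hom (G Mod H) K"
    and sep: "map_key \<phi> (lk G H s) \<noteq> map_key \<phi> (lk G H t)"
  proof (cases "\<exists>c d. c \<noteq> d \<and> lk G H s = KH c \<and> lk G H t = KH d")
    case True
    then obtain c d where cd: "c \<noteq> d" "lk G H s = KH c" "lk G H t = KH d" by blast
    have cc: "c \<in> carrier (G Mod H)" "d \<in> carrier (G Mod H)"
      using lk_KH s' t' cd by auto
    have "\<exists>(F :: nat monoid) f. group F \<and> finite (carrier F) \<and> f \<in> hom (G Mod H) F \<and> f c \<noteq> f d"
      using rf[unfolded group_res_finite_def, rule_format, OF cc(1) cc(2) cd(1)] .
    then obtain K :: "nat monoid" and \<phi> where Kp: "group K" "finite (carrier K)" "\<phi> \<in> hom (G Mod H) K" "\<phi> c \<noteq> \<phi> d"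
      by blast
    have "map_key \<phi> (lk G H s) \<noteq> map_key \<phi> (lk G H t)" using cd Kp(4) by simp
    then show ?thesis by (rule that[OF Kp(1-3)])
  next
    case False
    have "map_key (\<lambda>_. 0::nat) (lk G H s) \<noteq> map_key (\<lambda>_. 0) (lk G H t)"
      using key_sep[OF ne False] .
    then show ?thesis by (rule that[OF triv_group triv_fin triv_hom])
  qed
  define \<kappa> where "\<kappa> x = map_key \<phi> (lk G H x)" for x
  define \<rho> where "\<rho> = {(x, y). x \<in> Cset G H \<and> y \<in> Cset G H \<and> \<kappa> x = \<kappa> y}"
  have rc: "right_congruence (Cm G H) \<rho>"
    unfolding right_congruence_def
  proof (intro conjI allI impI)
    show "equiv (carrier (Cm G H)) \<rho>" using equiv_kernel[of "Cset G H" \<kappa>] by (simp add: Cm_def \<rho>_def)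
  next
    fix x y m assume "(x, y) \<in> \<rho>" "m \<in> carrier (Cm G H)"
    then show "(x \<otimes>\<^bsub>Cm G H\<^esub> m, y \<otimes>\<^bsub>Cm G H\<^esub> m) \<in> \<rho>"
      using kappa_compat[OF K(3)] cmul_cl by (auto simp: \<rho>_def \<kappa>_def Cm_def)
  qed
  have fin: "finite (carrier (Cm G H) // \<rho>)"
  proof -
    have "\<kappa> ` Cset G H \<subseteq> {K1, K0, KG, KN} \<union> KH ` carrier K"
    proof
      fix k assume "k \<in> \<kappa> ` Cset G H"
      then obtain x where x: "x \<in> Cset G H" "k = \<kappa> x" by blast
      show "k \<in> {K1, K0, KG, KN} \<union> KH ` carrier K"
        using x(1)
      proof (cases rule: Cset_cases)
        case (5 a)
        then have "H #> a \<in> carrier (G Mod H)" by (auto simp: carrier_FactGroup)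
        then have "\<phi> (H #> a) \<in> carrier K" using hom_in_carrier[OF K(3)] by blast
        then show ?thesis using x 5 by (simp add: \<kappa>_def)
      qed (use x in \<open>auto simp: \<kappa>_def\<close>)
    qed
    moreover have "finite ({K1, K0, KG, KN} \<union> KH ` carrier K)" using K(2) by simp
    ultimately have "finite (\<kappa> ` Cset G H)" by (rule finite_subset)
    then show ?thesis using quot_kernel_finite by (simp add: Cm_def \<rho>_def)
  qed
  have gl: "greenL (Cm G H) \<subseteq> \<rho>" by (auto simp: greenL_Cm \<rho>_def \<kappa>_def)
  have "(s, t) \<notin> \<rho>" using sep by (simp add: \<rho>_def \<kappa>_def)
  then show "\<exists>\<rho>. right_congruence (Cm G H) \<rho> \<and> finite (carrier (Cm G H) // \<rho>) \<and> greenL (Cm G H) \<subseteq> \<rho> \<and> (s, t) \<notin> \<rho>"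
    using rc fin gl by blast
qed

end



context normal
begin

lemma L_imp_rfQ:
  assumes rf: "L_action_res_finite (Cm G H)"
  shows "group_res_finite (G Mod H)"
  unfolding group_res_finite_def
proof (intro ballI impI)
  fix c1 c2 assume c1: "c1 \<in> carrier (G Mod H)" and c2: "c2 \<in> carrier (G Mod H)" and ne: "c1 \<noteq> c2"
  obtain g1 where g1: "g1 \<in> carrier G" "c1 = H #> g1" using c1 by (auto simp: carrier_FactGroup)
  obtain g2 where g2: "g2 \<in> carrier G" "c2 = H #> g2" using c2 by (auto simp: carrier_FactGroup)
  have ng: "(Hh g1, Hh g2) \<notin> greenL (Cm G H)" using ne g1 g2 by (simp add: greenL_Cm)
  have "Hh g1 \<in> carrier (Cm G H)" "Hh g2 \<in> carrier (Cm G H)" using g1 g2 by (auto simp: Cm_def)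
  then obtain \<rho> where rho: "right_congruence (Cm G H) \<rho>" "finite (carrier (Cm G H) // \<rho>)"
      "greenL (Cm G H) \<subseteq> \<rho>" "(Hh g1, Hh g2) \<notin> \<rho>"
    using rf ng unfolding L_action_res_finite_def by blast
  have eq: "equiv (Cset G H) \<rho>" using rho(1) by (simp add: right_congruence_def Cm_def)
  have comp: "\<And>s t m. (s, t) \<in> \<rho> \<Longrightarrow> m \<in> Cset G H \<Longrightarrow> (cmul G s m, cmul G t m) \<in> \<rho>"
    using rho(1) by (simp add: right_congruence_def Cm_def)
  have tr: "\<And>a b c. (a, b) \<in> \<rho> \<Longrightarrow> (b, c) \<in> \<rho> \<Longrightarrow> (a, c) \<in> \<rho>"
    using eq unfolding equiv_def trans_def by blast
  have rf': "\<And>a. a \<in> Cset G H \<Longrightarrow> (a, a) \<in> \<rho>"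
    using eq unfolding equiv_def refl_on_def by blast
  define Q where "Q = (\<lambda>g. \<rho> `` {Hh g}) ` carrier G"
  define act where "act q c = \<rho> `` {cmul G x (Gg a) | x a. x \<in> q \<and> a \<in> c}" for q c
  have act_eq: "act (\<rho> `` {Hh g}) (H #> a) = \<rho> `` {Hh (g \<otimes> a)}"
    if g: "g \<in> carrier G" and a: "a \<in> carrier G" for g a
  proof -
    let ?S = "{cmul G x (Gg a') | x a'. x \<in> \<rho> `` {Hh g} \<and> a' \<in> H #> a}"
    have sub: "(Hh (g \<otimes> a), z) \<in> \<rho>" if zS: "z \<in> ?S" for z
    proof -
      obtain x a' where z: "z = cmul G x (Gg a')" "(Hh g, x) \<in> \<rho>" "a' \<in> H #> a" using zS by blast
      obtain n where n: "n \<in> H" "a' = n \<otimes> a" using z(3) unfolding r_coset_def by blast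
      have a': "a' \<in> carrier G" using n a Hs by simp
      have "(cmul G (Hh g) (Gg a'), cmul G x (Gg a')) \<in> \<rho>" using comp[OF z(2), of "Gg a'"] a' by simp
      then have 1: "(Hh (g \<otimes> a'), z) \<in> \<rho>" using z(1) by simp
      have "H #> (g \<otimes> a) = H #> (g \<otimes> a')" using cos_mid[OF g n(1) a] n by simp
      then have "(Hh (g \<otimes> a), Hh (g \<otimes> a')) \<in> greenL (Cm G H)" using g a a' by (simp add: greenL_Cm)
      then have 2: "(Hh (g \<otimes> a), Hh (g \<otimes> a')) \<in> \<rho>" using rho(3) by blast
      show ?thesis using tr[OF 2 1] .
    qed
    have mem: "Hh (g \<otimes> a) \<in> ?S"
    proof -
      have "Hh g \<in> \<rho> `` {Hh g}" using rf' g by simp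
      moreover have "a \<in> H #> a" using rcos_self[OF a subgroup_axioms] .
      ultimately show ?thesis by force
    qed
    show ?thesis unfolding act_def
    proof
      show "\<rho> `` ?S \<subseteq> \<rho> `` {Hh (g \<otimes> a)}" using sub tr by blast
      show "\<rho> `` {Hh (g \<otimes> a)} \<subseteq> \<rho> `` ?S" using mem by blast
    qed
  qed
  have QE: "\<exists>g\<in>carrier G. q = \<rho> `` {Hh g}" if "q \<in> Q" for q using that by (auto simp: Q_def)
  have CE: "\<exists>a\<in>carrier G. c = H #> a" if "c \<in> carrier (G Mod H)" for c
    using that by (auto simp: carrier_FactGroup)
  have finQ: "finite Q"
  proof -
    have "Q \<subseteq> Cset G H // \<rho>" unfolding Q_def by (auto intro: quotientI)
    then show ?thesis using rho(2) by (simp add: Cm_def finite_subset)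
  qed
  have cl: "act q c \<in> Q" if h: "q \<in> Q" "c \<in> carrier (G Mod H)" for q c
    using QE[OF h(1)] CE[OF h(2)] act_eq by (auto simp: Q_def)
  have one: "act q \<one>\<^bsub>G Mod H\<^esub> = q" if qQ: "q \<in> Q" for q
  proof -
    obtain g where g: "g \<in> carrier G" "q = \<rho> `` {Hh g}" using QE[OF qQ] by blast
    have "\<one>\<^bsub>G Mod H\<^esub> = H #> \<one>" using subset by simp
    then show ?thesis using act_eq[of g \<one>] g by simp
  qed
  have cmp: "act (act q c) d = act q (c \<otimes>\<^bsub>G Mod H\<^esub> d)"
    if h: "q \<in> Q" "c \<in> carrier (G Mod H)" "d \<in> carrier (G Mod H)" for q c d
  proof -
    obtain g where g: "g \<in> carrier G" "q = \<rho> `` {Hh g}" using QE[OF h(1)] by blast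
    obtain a where a: "a \<in> carrier G" "c = H #> a" using CE[OF h(2)] by blast
    obtain b where b: "b \<in> carrier G" "d = H #> b" using CE[OF h(3)] by blast
    have "c \<otimes>\<^bsub>G Mod H\<^esub> d = H #> (a \<otimes> b)" using a b rcos_sum by simp
    then show ?thesis using act_eq g a b by (simp add: m_assoc)
  qed
  obtain F :: "nat monoid" and f where F: "group F" "finite (carrier F)" "f \<in> hom (G Mod H) F"
    and sep: "\<forall>q\<in>Q. \<forall>c\<in>carrier (G Mod H). \<forall>d\<in>carrier (G Mod H). act q c \<noteq> act q d \<longrightarrow> f c \<noteq> f d"
    using act_sep[OF factorgroup_is_group finQ cl one cmp] by blast
  have q0: "\<rho> `` {Hh \<one>} \<in> Q" by (auto simp: Q_def)
  have a1: "act (\<rho> `` {Hh \<one>}) c1 = \<rho> `` {Hh g1}" using act_eq[of \<one> g1] g1 by simp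
  have a2: "act (\<rho> `` {Hh \<one>}) c2 = \<rho> `` {Hh g2}" using act_eq[of \<one> g2] g2 by simp
  have "\<rho> `` {Hh g1} \<noteq> \<rho> `` {Hh g2}"
  proof
    assume "\<rho> `` {Hh g1} = \<rho> `` {Hh g2}"
    moreover have "Hh g2 \<in> \<rho> `` {Hh g2}" using rf' g2 by simp
    ultimately show False using rho(4) by blast
  qed
  then have "f c1 \<noteq> f c2" using sep q0 c1 c2 a1 a2 by metis
  then show "\<exists>(F :: nat monoid) f. group F \<and> finite (carrier F) \<and> f \<in> hom (G Mod H) F \<and> f c1 \<noteq> f c2"
    using F by blast
qed

end

theorem mainTheorem5:
  fixes G :: "('g, 'b) monoid_scheme" and N :: "'g set"
  assumes "group G" and "N \<lhd> G"
  shows "(monoid_res_finite (MGN G N) \<longleftrightarrow> group_res_finite G)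
       \<and> (L_action_res_finite (MGN G N) \<longleftrightarrow> group_res_finite (G Mod N))"
proof -
  interpret normal N G by (rule assms(2))
  show ?thesis
    using transfer_main rf_Cm_imp_G rf_G_imp_Cm rfQ_imp_L L_imp_rfQ by blast
qed


end
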